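(* Let $H$ be a finite nilpotent group, with Sylow $p$-subgroups $H_p$ for $p$ in the set $\pi$ of primes dividing $|H|$, so $H=\prod_{p\in\pi}H_p$. Suppose each $H_p$ is metacyclic with a metacyclic factorization $H_p=B_pA_p$ ($A_p$, $B_p$ cyclic, $A_p\trianglelefteq H_p$) such that the family $\mathcal{F}_{H_p}$ consisting of $A_p$, $B_p$ and the conjugates of $B_p$ in $H_p$ is regular and independent in $H_p$ and $H_p$ is its active sum. Let $\mathcal{F}_H=\bigcup_{p\in\pi}\mathcal{F}_{H_p}$. Then $H$ is the active sum of $\mathcal{F}_H$.
   Context: For a group $G$ and a family $\mathcal{F}$ of distinct subgroups that generates $G$ and is closed under conjugation, the active sum $S$ of $\mathcal{F}$ is the free product of the members of $\mathcal{F}$ divided by the normal subgroup generated by all elements $h^{-1}\cdot g\cdot h\cdot (g^h)^{-1}$ with $h\in F_1$, $g\in F_2$, $F_1,F_2\in\mathcal{F}$, where $g^h=h^{-1}gh$ is regarded as an element of the factor $h^{-1}F_2h\in\mathcal{F}$; the inclusions induce a canonical surjection $\varphi:S\to G$ and "$G$ is the active sum of $\mathcal{F}$" means $\varphi$ is an isomorphism. A (discrete) family is regular iff $[F,N_G(F)]=F\cap G'$ for all $F\in\mathcal{F}$; it is independent iff for a set $\mathcal{T}$ of representatives of conjugacy classes of its members the canonical map $\bigoplus_{F\in\mathcal{T}}F/(F\cap G')\to G/G'$ is an isomorphism. (Such factorizations of each $H_p$ exist by the paper's result on metacyclic $p$-groups.) *)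

theory Defs
  imports "HOL-Algebra.Algebra"
begin

definition conj_set :: "('a, 'b) monoid_scheme \<Rightarrow> 'a \<Rightarrow> 'a set \<Rightarrow> 'a set" where
  "conj_set G h F = (\<lambda>x. inv\<^bsub>G\<^esub> h \<otimes>\<^bsub>G\<^esub> x \<otimes>\<^bsub>G\<^esub> h) ` F"

definition normalizer_of :: "('a, 'b) monoid_scheme \<Rightarrow> 'a set \<Rightarrow> 'a set" where
  "normalizer_of G F = {h \<in> carrier G. conj_set G h F = F}"

definition comm_subgroup :: "('a, 'b) monoid_scheme \<Rightarrow> 'a set \<Rightarrow> 'a set \<Rightarrow> 'a set" where
  "comm_subgroup G U V = generate G
     (\<Union>x\<in>U. \<Union>y\<in>V. {x \<otimes>\<^bsub>G\<^esub> y \<otimes>\<^bsub>G\<^esub> inv\<^bsub>G\<^esub> x \<otimes>\<^bsub>G\<^esub> inv\<^bsub>G\<^esub> y})"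

fun lower_central :: "('a, 'b) monoid_scheme \<Rightarrow> nat \<Rightarrow> 'a set" where
  "lower_central G 0 = carrier G"
| "lower_central G (Suc n) = comm_subgroup G (lower_central G n) (carrier G)"

definition nilpotent_group :: "('a, 'b) monoid_scheme \<Rightarrow> bool" where
  "nilpotent_group G \<longleftrightarrow> group G \<and> (\<exists>n. lower_central G n = {\<one>\<^bsub>G\<^esub>})"

definition conj_closed_gen_family :: "('a, 'b) monoid_scheme \<Rightarrow> 'a set set \<Rightarrow> bool" where
  "conj_closed_gen_family G \<F> \<longleftrightarrow>
     (\<forall>F\<in>\<F>. subgroup F G) \<and>
     (\<forall>F\<in>\<F>. \<forall>h\<in>carrier G. conj_set G h F \<in> \<F>) \<and>
     generate G (\<Union>\<F>) = carrier G"

(* Active sum, as the monoid presentation of the free product of the members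
   (generators: pairs (F,g) with g in F; relations: multiplication tables and units
   of the factors) modulo the relations  h^{-1} g h = g^h  (g^h in the factor h^{-1} F2 h).
   actsum_rel is the congruence generated by these relations on words. *)
inductive actsum_rel :: "('a, 'b) monoid_scheme \<Rightarrow> 'a set set
     \<Rightarrow> ('a set \<times> 'a) list \<Rightarrow> ('a set \<times> 'a) list \<Rightarrow> bool"
  for G \<F> where
  refl: "actsum_rel G \<F> w w"
| sym: "actsum_rel G \<F> w w' \<Longrightarrow> actsum_rel G \<F> w' w"
| trans: "actsum_rel G \<F> w w' \<Longrightarrow> actsum_rel G \<F> w' w'' \<Longrightarrow> actsum_rel G \<F> w w''"
| mult: "F \<in> \<F> \<Longrightarrow> a \<in> F \<Longrightarrow> b \<in> F \<Longrightarrow>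
     actsum_rel G \<F> (u @ [(F, a), (F, b)] @ v) (u @ [(F, a \<otimes>\<^bsub>G\<^esub> b)] @ v)"
| unit: "F \<in> \<F> \<Longrightarrow> actsum_rel G \<F> (u @ [(F, \<one>\<^bsub>G\<^esub>)] @ v) (u @ v)"
| conj: "F1 \<in> \<F> \<Longrightarrow> F2 \<in> \<F> \<Longrightarrow> h \<in> F1 \<Longrightarrow> g \<in> F2 \<Longrightarrow>
     actsum_rel G \<F> (u @ [(F1, inv\<^bsub>G\<^esub> h), (F2, g), (F1, h)] @ v)
                     (u @ [(conj_set G h F2, inv\<^bsub>G\<^esub> h \<otimes>\<^bsub>G\<^esub> g \<otimes>\<^bsub>G\<^esub> h)] @ v)"

definition actsum_word :: "'a set set \<Rightarrow> ('a set \<times> 'a) list \<Rightarrow> bool" where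
  "actsum_word \<F> w \<longleftrightarrow> (\<forall>(F, g) \<in> set w. F \<in> \<F> \<and> g \<in> F)"

definition actsum_eval :: "('a, 'b) monoid_scheme \<Rightarrow> ('a set \<times> 'a) list \<Rightarrow> 'a" where
  "actsum_eval G w = foldr (\<lambda>(F, g) acc. g \<otimes>\<^bsub>G\<^esub> acc) w \<one>\<^bsub>G\<^esub>"

(* G is the active sum of F: phi is an isomorphism.  phi is surjective since F
   generates G; injectivity means words with equal image are equal in S. *)
definition is_active_sum :: "('a, 'b) monoid_scheme \<Rightarrow> 'a set set \<Rightarrow> bool" where
  "is_active_sum G \<F> \<longleftrightarrow> conj_closed_gen_family G \<F> \<and>
     (\<forall>w w'. actsum_word \<F> w \<and> actsum_word \<F> w' \<and> actsum_eval G w = actsum_eval G w'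
        \<longrightarrow> actsum_rel G \<F> w w')"

definition regular_family :: "('a, 'b) monoid_scheme \<Rightarrow> 'a set set \<Rightarrow> bool" where
  "regular_family G \<F> \<longleftrightarrow>
     (\<forall>F\<in>\<F>. comm_subgroup G F (normalizer_of G F) = F \<inter> derived G (carrier G))"

definition conj_reps :: "('a, 'b) monoid_scheme \<Rightarrow> 'a set set \<Rightarrow> 'a set set \<Rightarrow> bool" where
  "conj_reps G \<F> T \<longleftrightarrow> T \<subseteq> \<F> \<and>
     (\<forall>F\<in>\<F>. \<exists>!F'\<in>T. \<exists>h\<in>carrier G. F = conj_set G h F')"

(* canonical map  (+)_{F in T} F/(F \<inter> G') -> G/G' *)
definition indep_map :: "('a, 'b) monoid_scheme \<Rightarrow> 'a set set \<Rightarrow> ('a set \<Rightarrow> 'a set) \<Rightarrow> 'a set" where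
  "indep_map G T x = finprod (G Mod derived G (carrier G))
      (\<lambda>F. derived G (carrier G) <#>\<^bsub>G\<^esub> x F)
      {F \<in> T. x F \<noteq> \<one>\<^bsub>subgroup_generated G F Mod (F \<inter> derived G (carrier G))\<^esub>}"

definition independent_family :: "('a, 'b) monoid_scheme \<Rightarrow> 'a set set \<Rightarrow> bool" where
  "independent_family G \<F> \<longleftrightarrow> (\<exists>T. conj_reps G \<F> T \<and>
     indep_map G T \<in> iso (sum_group T (\<lambda>F. subgroup_generated G F Mod (F \<inter> derived G (carrier G))))
                          (G Mod derived G (carrier G)))"

end

theory Submission
  imports Defs
begin

context group begin

lemma cancel1 [simp]: "g \<in> carrier G \<Longrightarrow> z \<in> carrier G \<Longrightarrow> inv g \<otimes> (g \<otimes> z) = z"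
  by (simp add: m_assoc[symmetric])
lemma cancel2 [simp]: "g \<in> carrier G \<Longrightarrow> z \<in> carrier G \<Longrightarrow> g \<otimes> (inv g \<otimes> z) = z"
  by (simp add: m_assoc[symmetric])

lemma lc_normal: "lower_central G k \<lhd> G"
proof (induction k)
  case 0 show ?case by (simp add: normal_invI subgroup_self)
next
  case (Suc k)
  interpret N: normal "lower_central G k" G by (rule Suc)
  show ?case unfolding lower_central.simps comm_subgroup_def
  proof (rule normal_generateI)
    show "(\<Union>x\<in>lower_central G k. \<Union>y\<in>carrier G. {x \<otimes> y \<otimes> inv x \<otimes> inv y}) \<subseteq> carrier G"
      using N.subset by auto
  next
    fix h g assume h: "h \<in> (\<Union>x\<in>lower_central G k. \<Union>y\<in>carrier G. {x \<otimes> y \<otimes> inv x \<otimes> inv y})"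
      and g: "g \<in> carrier G"
    then obtain x y where x: "x \<in> lower_central G k" and y: "y \<in> carrier G"
      and hd: "h = x \<otimes> y \<otimes> inv x \<otimes> inv y" by auto
    have xc: "x \<in> carrier G" using x N.subset by auto
    have "g \<otimes> h \<otimes> inv g = (g \<otimes> x \<otimes> inv g) \<otimes> (g \<otimes> y \<otimes> inv g) \<otimes> inv (g \<otimes> x \<otimes> inv g) \<otimes> inv (g \<otimes> y \<otimes> inv g)"
      using xc y g by (simp add: hd m_assoc inv_mult_group r_inv_ex)
    moreover have "g \<otimes> x \<otimes> inv g \<in> lower_central G k" using N.inv_op_closed2 g x by blast
    ultimately show "g \<otimes> h \<otimes> inv g \<in> (\<Union>x\<in>lower_central G k. \<Union>y\<in>carrier G. {x \<otimes> y \<otimes> inv x \<otimes> inv y})"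
      using g y by blast
  qed
qed

lemma sub_pow_closed: "subgroup N G \<Longrightarrow> c \<in> N \<Longrightarrow> c [^] (n::nat) \<in> N"
  by (induction n) (auto intro: subgroup.one_closed subgroup.m_closed)

lemma lc_sub: "lower_central G k \<subseteq> carrier G"
  using lc_normal[of k] normal_imp_subgroup subgroup.subset by blast

lemma lc_comm: "u \<in> lower_central G k \<Longrightarrow> g \<in> carrier G \<Longrightarrow> u \<otimes> g \<otimes> inv u \<otimes> inv g \<in> lower_central G (Suc k)"
  unfolding lower_central.simps comm_subgroup_def by (rule generate.incl) blast

lemma lc_mono: "lower_central G (Suc k) \<subseteq> lower_central G k"
proof -
  interpret N: normal "lower_central G k" G by (rule lc_normal)
  show ?thesis unfolding lower_central.simps comm_subgroup_def
  proof (rule generate_subgroup_incl)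
    show "subgroup (lower_central G k) G" by (rule N.subgroup_axioms)
    show "(\<Union>x\<in>lower_central G k. \<Union>y\<in>carrier G. {x \<otimes> y \<otimes> inv x \<otimes> inv y}) \<subseteq> lower_central G k"
    proof clarify
      fix x y assume x: "x \<in> lower_central G k" and y: "y \<in> carrier G"
      have xc: "x \<in> carrier G" using x N.subset by auto
      have "x \<otimes> y \<otimes> inv x \<otimes> inv y = x \<otimes> (y \<otimes> inv x \<otimes> inv y)" using xc y by (simp add: m_assoc)
      moreover have "y \<otimes> inv x \<otimes> inv y \<in> lower_central G k" using N.inv_op_closed2 y x N.m_inv_closed by blast
      ultimately show "x \<otimes> y \<otimes> inv x \<otimes> inv y \<in> lower_central G k" using x N.m_closed by simp
    qed
  qed
qed

lemma coprime_mem: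
  assumes N: "subgroup N G" and c: "c \<in> carrier G" and m: "c [^] (m::nat) \<in> N" and n: "c [^] (n::nat) \<in> N"
    and cop: "coprime m n"
  shows "c \<in> N"
proof (cases "m = 0")
  case True
  then have "n = 1" using cop by simp
  then show ?thesis using n c by simp
next
  case False
  from bezout_nat[OF False, of n] cop obtain a b where ab: "m * a = n * b + 1" by auto
  have "c [^] (m * a) = c [^] (n * b) \<otimes> c" using c by (simp add: ab nat_pow_mult[symmetric])
  hence "c = inv (c [^] (n * b)) \<otimes> c [^] (m * a)" using c by simp
  moreover have "c [^] (m * a) \<in> N" using m c by (simp add: nat_pow_pow[symmetric] sub_pow_closed[OF N])
  moreover have "c [^] (n * b) \<in> N" using n c by (simp add: nat_pow_pow[symmetric] sub_pow_closed[OF N])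
  ultimately show ?thesis using N by (metis subgroup.m_closed subgroup.m_inv_closed)
qed

lemma comm_pow:
  assumes x: "x \<in> carrier G" and y: "y \<in> carrier G"
    and cK: "x \<otimes> y \<otimes> inv x \<otimes> inv y \<in> lower_central G k"
  shows "\<exists>n\<in>lower_central G (Suc k). (x [^] (j::nat)) \<otimes> y \<otimes> inv (x [^] j) \<otimes> inv y = (x \<otimes> y \<otimes> inv x \<otimes> inv y) [^] j \<otimes> n"
proof (induction j)
  case 0
  have "\<one> \<in> lower_central G (Suc k)" using lc_normal normal_imp_subgroup subgroup.one_closed by blast
  then show ?case using y by (intro bexI[of _ \<one>]) auto
next
  case (Suc j)
  interpret N: normal "lower_central G (Suc k)" G by (rule lc_normal)
  interpret K: normal "lower_central G k" G by (rule lc_normal)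
  define c where "c = x \<otimes> y \<otimes> inv x \<otimes> inv y"
  from Suc obtain n where n: "n \<in> lower_central G (Suc k)"
    and cj: "(x [^] j) \<otimes> y \<otimes> inv (x [^] j) \<otimes> inv y = c [^] j \<otimes> n" unfolding c_def by blast
  define a where "a = x [^] j"
  have ac: "a \<in> carrier G" unfolding a_def using x by simp
  have cc: "c \<in> carrier G" unfolding c_def using x y by simp
  have nc: "n \<in> carrier G" using n N.subset by auto
  have cjK: "c [^] j \<otimes> n \<in> lower_central G k"
    using cK lc_mono n unfolding c_def[symmetric] by (blast intro: K.m_closed sub_pow_closed K.subgroup_axioms)
  define cj' where "cj' = c [^] j \<otimes> n"
  have cj'c: "cj' \<in> carrier G" unfolding cj'_def using cc nc by simp
  have e1: "(x [^] Suc j) \<otimes> y \<otimes> inv (x [^] Suc j) \<otimes> inv y = x \<otimes> (a \<otimes> y \<otimes> inv a \<otimes> inv y) \<otimes> inv x \<otimes> c"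
    unfolding a_def c_def nat_pow_Suc2[OF x] using x y by (simp add: m_assoc inv_mult_group del: nat_pow_Suc)
  have e2: "x \<otimes> cj' \<otimes> inv x = cj' \<otimes> (inv cj' \<otimes> x \<otimes> inv (inv cj') \<otimes> inv x)"
    using x cj'c by (simp add: m_assoc)
  have m: "inv cj' \<otimes> x \<otimes> inv (inv cj') \<otimes> inv x \<in> lower_central G (Suc k)"
    using lc_comm[of "inv cj'" k x] cjK x unfolding cj'_def by (blast intro: K.m_inv_closed)
  define mm where "mm = inv cj' \<otimes> x \<otimes> inv (inv cj') \<otimes> inv x"
  have mmc: "mm \<in> carrier G" using m N.subset mm_def by auto
  have "(x [^] Suc j) \<otimes> y \<otimes> inv (x [^] Suc j) \<otimes> inv y = c [^] j \<otimes> n \<otimes> mm \<otimes> c"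
    using e1 e2 cj cj'_def mm_def a_def by simp
  also have "\<dots> = c [^] Suc j \<otimes> (inv c \<otimes> (n \<otimes> mm) \<otimes> inv (inv c))"
    using cc nc mmc by (simp add: m_assoc)
  finally have eq: "(x [^] Suc j) \<otimes> y \<otimes> inv (x [^] Suc j) \<otimes> inv y = c [^] Suc j \<otimes> (inv c \<otimes> (n \<otimes> mm) \<otimes> inv (inv c))" .
  have "inv c \<otimes> (n \<otimes> mm) \<otimes> inv (inv c) \<in> lower_central G (Suc k)"
    using N.inv_op_closed2 cc n m mm_def by (blast intro: N.m_closed)
  then show ?case using eq c_def by blast
qed

lemma comm_swap: "x \<in> carrier G \<Longrightarrow> y \<in> carrier G \<Longrightarrow> y \<otimes> x \<otimes> inv y \<otimes> inv x = inv (x \<otimes> y \<otimes> inv x \<otimes> inv y)"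
  by (simp add: inv_mult_group m_assoc)

lemma comm_one_imp: "x \<in> carrier G \<Longrightarrow> y \<in> carrier G \<Longrightarrow> x \<otimes> y \<otimes> inv x \<otimes> inv y = \<one> \<Longrightarrow> x \<otimes> y = y \<otimes> x"
proof -
  assume x: "x \<in> carrier G" and y: "y \<in> carrier G" and c: "x \<otimes> y \<otimes> inv x \<otimes> inv y = \<one>"
  have "x \<otimes> y = (x \<otimes> y \<otimes> inv x \<otimes> inv y) \<otimes> (y \<otimes> x)" using x y by (simp add: m_assoc)
  then show ?thesis using c x y by simp
qed

lemma comm_pow_mem:
  assumes x: "x \<in> carrier G" and y: "y \<in> carrier G" and xm: "x [^] (m::nat) = \<one>"
    and cK: "x \<otimes> y \<otimes> inv x \<otimes> inv y \<in> lower_central G k"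
  shows "(x \<otimes> y \<otimes> inv x \<otimes> inv y) [^] m \<in> lower_central G (Suc k)"
proof -
  interpret N: normal "lower_central G (Suc k)" G by (rule lc_normal)
  obtain n where n: "n \<in> lower_central G (Suc k)"
    and e: "(x [^] m) \<otimes> y \<otimes> inv (x [^] m) \<otimes> inv y = (x \<otimes> y \<otimes> inv x \<otimes> inv y) [^] m \<otimes> n"
    using comm_pow[OF x y cK] by blast
  have nc: "n \<in> carrier G" using n N.subset by auto
  have e1: "(x \<otimes> y \<otimes> inv x \<otimes> inv y) [^] m \<otimes> n = \<one>" using e xm y by simp
  have "(x \<otimes> y \<otimes> inv x \<otimes> inv y) [^] m = ((x \<otimes> y \<otimes> inv x \<otimes> inv y) [^] m \<otimes> n) \<otimes> inv n"
    using nc x y by (simp add: m_assoc)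
  also have "\<dots> = inv n" unfolding e1 using nc by simp
  finally have "(x \<otimes> y \<otimes> inv x \<otimes> inv y) [^] m = inv n" .
  then show ?thesis using n N.m_inv_closed by simp
qed

lemma nilp_commute:
  assumes nil: "lower_central G n0 = {\<one>}" and x: "x \<in> carrier G" and y: "y \<in> carrier G"
    and xm: "x [^] (m::nat) = \<one>" and yn: "y [^] (n::nat) = \<one>" and cop: "coprime m n"
  shows "x \<otimes> y = y \<otimes> x"
proof -
  have all: "x \<otimes> y \<otimes> inv x \<otimes> inv y \<in> lower_central G (Suc k)" for k
  proof (induction k)
    case 0 then show ?case using lc_comm[of x 0 y] x y by simp
  next
    case (Suc k)
    interpret N: normal "lower_central G (Suc (Suc k))" G by (rule lc_normal)
    have c1: "(x \<otimes> y \<otimes> inv x \<otimes> inv y) [^] m \<in> lower_central G (Suc (Suc k))"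
      by (rule comm_pow_mem[OF x y xm Suc])
    have "inv (x \<otimes> y \<otimes> inv x \<otimes> inv y) \<in> lower_central G (Suc k)"
      by (rule subgroup.m_inv_closed[OF normal_imp_subgroup[OF lc_normal] Suc])
    then have ck: "y \<otimes> x \<otimes> inv y \<otimes> inv x \<in> lower_central G (Suc k)"
      using comm_swap[OF x y] by simp
    have "(y \<otimes> x \<otimes> inv y \<otimes> inv x) [^] n \<in> lower_central G (Suc (Suc k))"
      by (rule comm_pow_mem[OF y x yn ck])
    moreover have "(y \<otimes> x \<otimes> inv y \<otimes> inv x) [^] n = inv ((x \<otimes> y \<otimes> inv x \<otimes> inv y) [^] n)"
      unfolding comm_swap[OF x y] by (rule nat_pow_inv) (use x y in simp)
    ultimately have ii: "inv ((x \<otimes> y \<otimes> inv x \<otimes> inv y) [^] n) \<in> lower_central G (Suc (Suc k))"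
      by simp
    have c2: "(x \<otimes> y \<otimes> inv x \<otimes> inv y) [^] n \<in> lower_central G (Suc (Suc k))"
      using N.m_inv_closed[OF ii] x y by simp
    show ?case using coprime_mem[OF N.subgroup_axioms _ c1 c2 cop] x y by simp
  qed
  have "x \<otimes> y \<otimes> inv x \<otimes> inv y \<in> lower_central G n0" using all[of n0] lc_mono by blast
  then have "x \<otimes> y \<otimes> inv x \<otimes> inv y = \<one>" using nil by blast
  then show ?thesis by (rule comm_one_imp[OF x y])
qed

end

lemma rel_ctx: "actsum_rel G F a b \<Longrightarrow> actsum_rel G F (u @ a @ v) (u @ b @ v)"
proof (induction rule: actsum_rel.induct)
  case (refl w) then show ?case by (rule actsum_rel.refl)
next
  case (sym w w') then show ?case by (blast intro: actsum_rel.sym)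
next
  case (trans w w' w'') then show ?case by (blast intro: actsum_rel.trans)
next
  case (mult F0 a b u' v')
  then show ?case using actsum_rel.mult[of F0 F a b G "u @ u'" "v' @ v"] by simp
next
  case (unit F0 u' v')
  then show ?case using actsum_rel.unit[of F0 F G "u @ u'" "v' @ v"] by simp
next
  case (conj F1 F2 h g u' v')
  then show ?case using actsum_rel.conj[of F1 F F2 h g G "u @ u'" "v' @ v"] by simp
qed

lemma rel_app: "actsum_rel G F a b \<Longrightarrow> actsum_rel G F c d \<Longrightarrow> actsum_rel G F (a @ c) (b @ d)"
proof -
  assume ab: "actsum_rel G F a b" and cd: "actsum_rel G F c d"
  have "actsum_rel G F ([] @ a @ c) ([] @ b @ c)" by (rule rel_ctx[OF ab])
  moreover have "actsum_rel G F (b @ c @ []) (b @ d @ [])" by (rule rel_ctx[OF cd])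
  ultimately show ?thesis by (auto intro: actsum_rel.trans)
qed

lemma eval_Nil [simp]: "actsum_eval G [] = \<one>\<^bsub>G\<^esub>" by (simp add: actsum_eval_def)
lemma eval_Cons [simp]: "actsum_eval G (l # w) = snd l \<otimes>\<^bsub>G\<^esub> actsum_eval G w"
  by (cases l) (simp add: actsum_eval_def)

context group begin

lemma eval_closed: "set (map snd w) \<subseteq> carrier G \<Longrightarrow> actsum_eval G w \<in> carrier G"
  by (induction w) auto

lemma eval_append: "set (map snd u) \<subseteq> carrier G \<Longrightarrow> set (map snd v) \<subseteq> carrier G \<Longrightarrow>
    actsum_eval G (u @ v) = actsum_eval G u \<otimes> actsum_eval G v"
  by (induction u) (auto simp: m_assoc eval_closed)

lemma rel_sound:
  assumes Fc: "\<forall>F\<in>Fam. F \<subseteq> carrier G" and r: "actsum_rel G Fam w w'"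
  shows "(set (map snd w) \<subseteq> carrier G \<longleftrightarrow> set (map snd w') \<subseteq> carrier G) \<and>
         (set (map snd w) \<subseteq> carrier G \<longrightarrow> actsum_eval G w = actsum_eval G w')"
  using r
proof (induction rule: actsum_rel.induct)
  case (refl w) then show ?case by simp
next
  case (sym w w') then show ?case by simp
next
  case (trans w w' w'') then show ?case by simp
next
  case (mult F a b u v)
  then have ab: "a \<in> carrier G" "b \<in> carrier G" using Fc by auto
  show ?case using ab by (auto simp: eval_append eval_closed m_assoc)
next
  case (unit F u v)
  then show ?case by (auto simp: eval_append eval_closed)
next
  case (conj F1 F2 h g u v)
  then have hg: "h \<in> carrier G" "g \<in> carrier G" using Fc by auto
  show ?case using hg by (auto simp: eval_append eval_closed m_assoc)
qed

lemma rel_lift: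
  assumes S: "subgroup S G" and FS: "\<forall>F\<in>Fam. F \<subseteq> S" and sub: "Fam \<subseteq> Fam'"
    and r: "actsum_rel (G\<lparr>carrier := S\<rparr>) Fam w w'"
  shows "actsum_rel G Fam' w w'"
  using r
proof (induction rule: actsum_rel.induct)
  case (refl w) then show ?case by (rule actsum_rel.refl)
next
  case (sym w w') then show ?case by (blast intro: actsum_rel.sym)
next
  case (trans w w' w'') then show ?case by (blast intro: actsum_rel.trans)
next
  case (mult F a b u v)
  then show ?case using actsum_rel.mult[of F Fam' a b G u v] sub by auto
next
  case (unit F u v)
  then show ?case using actsum_rel.unit[of F Fam' G u v] sub by auto
next
  case (conj F1 F2 h g u v)
  have hS: "h \<in> S" using conj FS by auto
  have i: "inv\<^bsub>G\<lparr>carrier := S\<rparr>\<^esub> h = inv h" using m_inv_consistent[OF S hS] .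
  have c: "conj_set (G\<lparr>carrier := S\<rparr>) h F2 = conj_set G h F2" unfolding conj_set_def i by simp
  show ?case using actsum_rel.conj[of F1 Fam' F2 h g G u v] conj sub unfolding c i by auto
qed

end

locale LS = group G for G (structure) +
  fixes P :: "nat set" and Hp :: "nat \<Rightarrow> 'a set" and Fam :: "nat \<Rightarrow> 'a set set" and e :: "nat \<Rightarrow> nat"
  assumes finP: "finite P"
    and sub: "p \<in> P \<Longrightarrow> subgroup (Hp p) G"
    and powe: "p \<in> P \<Longrightarrow> x \<in> Hp p \<Longrightarrow> x [^] (p ^ e p) = \<one>"
    and copr: "p \<in> P \<Longrightarrow> q \<in> P \<Longrightarrow> p \<noteq> q \<Longrightarrow> coprime (p ^ e p) (q ^ e q)"
    and comm: "p \<in> P \<Longrightarrow> q \<in> P \<Longrightarrow> p \<noteq> q \<Longrightarrow> x \<in> Hp p \<Longrightarrow> y \<in> Hp q \<Longrightarrow> x \<otimes> y = y \<otimes> x"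
    and famsub: "p \<in> P \<Longrightarrow> F \<in> Fam p \<Longrightarrow> subgroup F G \<and> F \<subseteq> Hp p"
    and conjc: "p \<in> P \<Longrightarrow> F \<in> Fam p \<Longrightarrow> h \<in> Hp p \<Longrightarrow> conj_set G h F \<in> Fam p"
    and genp: "p \<in> P \<Longrightarrow> Hp p \<subseteq> generate G (\<Union>(Fam p))"
    and genall: "generate G (\<Union>p\<in>P. Hp p) = carrier G"
    and actp: "p \<in> P \<Longrightarrow> actsum_word (Fam p) w \<Longrightarrow> actsum_word (Fam p) w' \<Longrightarrow>
        actsum_eval G w = actsum_eval G w' \<Longrightarrow> actsum_rel (G\<lparr>carrier := Hp p\<rparr>) (Fam p) w w'"
begin

definition FF where "FF = (\<Union>p\<in>P. Fam p)"
definition prm where "prm F = (SOME p. p \<in> P \<and> F \<in> Fam p)"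
definition wq where "wq Q w \<longleftrightarrow> (\<forall>l\<in>set w. fst l \<in> FF \<and> snd l \<in> fst l \<and> prm (fst l) \<in> Q)"

lemma prI: "F \<in> FF \<Longrightarrow> prm F \<in> P \<and> F \<in> Fam (prm F)"
  unfolding prm_def FF_def by (rule someI_ex) blast

lemma letter_Hp: "F \<in> FF \<Longrightarrow> g \<in> F \<Longrightarrow> g \<in> Hp (prm F)"
  using prI famsub by blast

lemma letter_carrier: "F \<in> FF \<Longrightarrow> g \<in> F \<Longrightarrow> g \<in> carrier G"
  using letter_Hp prI sub subgroup.subset by blast

lemma wq_carrier: "wq Q w \<Longrightarrow> set (map snd w) \<subseteq> carrier G"
  unfolding wq_def using letter_carrier by auto

lemma FF_carrier: "\<forall>F\<in>FF. F \<subseteq> carrier G"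
  using letter_carrier by blast

lemma conj_id:
  assumes h: "h \<in> carrier G" and F: "F \<subseteq> carrier G" and c: "\<And>x. x \<in> F \<Longrightarrow> x \<otimes> h = h \<otimes> x"
  shows "conj_set G h F = F"
proof -
  have "inv h \<otimes> x \<otimes> h = x" if x: "x \<in> F" for x
  proof -
    have xc: "x \<in> carrier G" using x F by auto
    have "inv h \<otimes> x \<otimes> h = inv h \<otimes> (x \<otimes> h)" using xc h by (simp add: m_assoc)
    also have "\<dots> = inv h \<otimes> (h \<otimes> x)" using c[OF x] by simp
    also have "\<dots> = x" using xc h by simp
    finally show ?thesis .
  qed
  then show ?thesis unfolding conj_set_def by simp
qed

lemma swap:
  assumes F1: "F1 \<in> FF" and F2: "F2 \<in> FF" and h: "h \<in> F1" and g: "g \<in> F2" and ne: "prm F1 \<noteq> prm F2"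
  shows "actsum_rel G FF [(F2, g), (F1, h)] [(F1, h), (F2, g)]"
proof -
  have hc: "h \<in> carrier G" by (rule letter_carrier[OF F1 h])
  have gc: "g \<in> carrier G" by (rule letter_carrier[OF F2 g])
  have F2c: "F2 \<subseteq> carrier G" using F2 FF_carrier by blast
  have p1: "prm F1 \<in> P" using prI[OF F1] by blast
  have p2: "prm F2 \<in> P" using prI[OF F2] by blast
  have ne': "prm F2 \<noteq> prm F1" using ne by (rule not_sym)
  have cm: "x \<otimes> h = h \<otimes> x" if "x \<in> F2" for x
    by (rule comm[OF p2 p1 ne' letter_Hp[OF F2 that] letter_Hp[OF F1 h]])
  have cs: "conj_set G h F2 = F2" by (rule conj_id[OF hc F2c cm])
  have gg: "inv h \<otimes> g \<otimes> h = g"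
  proof -
    have "inv h \<otimes> g \<otimes> h = inv h \<otimes> (g \<otimes> h)" using gc hc by (simp add: m_assoc)
    also have "\<dots> = inv h \<otimes> (h \<otimes> g)" using cm[OF g] by simp
    also have "\<dots> = g" using gc hc by simp
    finally show ?thesis .
  qed
  have F1p: "F1 \<in> Fam (prm F1)" using prI[OF F1] by blast
  have ih: "inv h \<in> F1" by (rule subgroup.m_inv_closed[OF conjunct1[OF famsub[OF p1 F1p]] h])
  have r1: "actsum_rel G FF ([(F1,h)] @ [(F1, inv h),(F2,g),(F1,h)] @ []) ([(F1,h)] @ [(conj_set G h F2, inv h \<otimes> g \<otimes> h)] @ [])"
    by (rule actsum_rel.conj[OF F1 F2 h g])
  have r2: "actsum_rel G FF ([] @ [(F1,h),(F1,inv h)] @ [(F2,g),(F1,h)]) ([] @ [(F1, h \<otimes> inv h)] @ [(F2,g),(F1,h)])"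
    by (rule actsum_rel.mult[OF F1 h ih])
  have r3: "actsum_rel G FF ([] @ [(F1, \<one>)] @ [(F2,g),(F1,h)]) ([] @ [(F2,g),(F1,h)])"
    by (rule actsum_rel.unit[OF F1])
  have r1': "actsum_rel G FF [(F1,h),(F1, inv h),(F2,g),(F1,h)] [(F1,h),(F2,g)]" using r1 unfolding cs gg by simp
  have r2': "actsum_rel G FF [(F1,h),(F1, inv h),(F2,g),(F1,h)] [(F1,\<one>),(F2,g),(F1,h)]" using r2 hc by simp
  have r3': "actsum_rel G FF [(F1,\<one>),(F2,g),(F1,h)] [(F2,g),(F1,h)]" using r3 by simp
  show ?thesis by (rule actsum_rel.trans[OF actsum_rel.sym[OF r3'] actsum_rel.trans[OF actsum_rel.sym[OF r2'] r1']])
qed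

lemma move:
  assumes l: "fst l \<in> FF" "snd l \<in> fst l"
    and v: "\<forall>x\<in>set v. fst x \<in> FF \<and> snd x \<in> fst x \<and> prm (fst x) \<noteq> prm (fst l)"
  shows "actsum_rel G FF (l # v) (v @ [l])"
  using v
proof (induction v)
  case Nil then show ?case by (simp add: actsum_rel.refl)
next
  case (Cons x v)
  obtain F1 h where lF: "l = (F1, h)" by (cases l)
  obtain F2 g where xF: "x = (F2, g)" by (cases x)
  have xx: "fst x \<in> FF \<and> snd x \<in> fst x \<and> prm (fst x) \<noteq> prm (fst l)" using Cons.prems by simp
  have vv: "\<forall>x\<in>set v. fst x \<in> FF \<and> snd x \<in> fst x \<and> prm (fst x) \<noteq> prm (fst l)" using Cons.prems by simp
  have F1: "F1 \<in> FF" and h: "h \<in> F1" using l lF by auto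
  have F2: "F2 \<in> FF" and g: "g \<in> F2" and ne: "prm F2 \<noteq> prm F1" using xx lF xF by auto
  have s0: "actsum_rel G FF [(F1, h), (F2, g)] [(F2, g), (F1, h)]"
    by (rule swap[OF F2 F1 g h ne])
  have s': "actsum_rel G FF ([] @ [l, x] @ v) ([] @ [x, l] @ v)" unfolding lF xF by (rule rel_ctx[OF s0])
  have ih: "actsum_rel G FF ([x] @ (l # v) @ []) ([x] @ (v @ [l]) @ [])"
    by (rule rel_ctx[OF Cons.IH[OF vv]])
  have s'': "actsum_rel G FF (l # x # v) (x # l # v)" using s' by simp
  have ih': "actsum_rel G FF (x # l # v) (x # v @ [l])" using ih by simp
  show ?case using actsum_rel.trans[OF s'' ih'] by simp
qed

lemma split:
  assumes "wq Q w"
  shows "actsum_rel G FF w (filter (\<lambda>l. prm (fst l) = p) w @ filter (\<lambda>l. prm (fst l) \<noteq> p) w)"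
  using assms
proof (induction w)
  case Nil then show ?case by (simp add: actsum_rel.refl)
next
  case (Cons l w)
  have wqw: "wq Q w" using Cons.prems unfolding wq_def by simp
  have ll: "fst l \<in> FF" "snd l \<in> fst l" using Cons.prems unfolding wq_def by simp_all
  note ih = Cons.IH[OF wqw]
  define a where "a = filter (\<lambda>l. prm (fst l) = p) w"
  define b where "b = filter (\<lambda>l. prm (fst l) \<noteq> p) w"
  have r1: "actsum_rel G FF ([l] @ w @ []) ([l] @ (a @ b) @ [])" unfolding a_def b_def by (rule rel_ctx[OF ih])
  have r1': "actsum_rel G FF (l # w) (l # a @ b)" using r1 by simp
  show ?case
  proof (cases "prm (fst l) = p")
    case True
    then show ?thesis using r1' unfolding a_def b_def by simp
  next
    case False
    have "\<forall>x\<in>set a. fst x \<in> FF \<and> snd x \<in> fst x \<and> prm (fst x) \<noteq> prm (fst l)"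
      using wqw False unfolding a_def wq_def by auto
    then have r2: "actsum_rel G FF ([] @ (l # a) @ b) ([] @ (a @ [l]) @ b)" by (rule rel_ctx[OF move[OF ll]])
    have r2': "actsum_rel G FF (l # a @ b) (a @ l # b)" using r2 by simp
    show ?thesis using actsum_rel.trans[OF r1' r2'] False unfolding a_def b_def by simp
  qed
qed

lemma eval_Hp:
  assumes p: "p \<in> P" shows "(\<forall>l\<in>set w. fst l \<in> FF \<and> snd l \<in> fst l \<and> prm (fst l) = p) \<Longrightarrow> actsum_eval G w \<in> Hp p"
proof (induction w)
  case Nil then show ?case using subgroup.one_closed[OF sub[OF p]] by simp
next
  case (Cons l w)
  have a: "fst l \<in> FF" "snd l \<in> fst l" "prm (fst l) = p" using Cons.prems by simp_all
  have "snd l \<in> Hp p" using letter_Hp[OF a(1) a(2)] a(3) by simp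
  moreover have "actsum_eval G w \<in> Hp p" using Cons by simp
  ultimately show ?case using subgroup.m_closed[OF sub[OF p]] by simp
qed

lemma eval_comm:
  assumes r: "r \<in> P" "r \<notin> Q" and x: "x \<in> Hp r"
  shows "wq Q w \<Longrightarrow> actsum_eval G w \<otimes> x = x \<otimes> actsum_eval G w"
proof (induction w)
  case Nil
  have "x \<in> carrier G" using x sub[OF r(1)] subgroup.subset by blast
  then show ?case by simp
next
  case (Cons l w)
  have xc: "x \<in> carrier G" using x sub[OF r(1)] subgroup.subset by blast
  have a: "fst l \<in> FF" "snd l \<in> fst l" "prm (fst l) \<in> Q" using Cons.prems unfolding wq_def by simp_all
  have wqw: "wq Q w" using Cons.prems unfolding wq_def by simp
  have gc: "snd l \<in> carrier G" by (rule letter_carrier[OF a(1) a(2)])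
  have Ec: "actsum_eval G w \<in> carrier G" by (rule eval_closed[OF wq_carrier[OF wqw]])
  have pP: "prm (fst l) \<in> P" using prI[OF a(1)] by blast
  have ne: "prm (fst l) \<noteq> r" using a(3) r(2) by blast
  have gx: "snd l \<otimes> x = x \<otimes> snd l" by (rule comm[OF pP r(1) ne letter_Hp[OF a(1) a(2)] x])
  have ih: "actsum_eval G w \<otimes> x = x \<otimes> actsum_eval G w" by (rule Cons.IH[OF wqw])
  have "actsum_eval G (l # w) \<otimes> x = snd l \<otimes> (actsum_eval G w \<otimes> x)" using gc Ec xc by (simp add: m_assoc)
  also have "\<dots> = (snd l \<otimes> x) \<otimes> actsum_eval G w" unfolding ih using gc Ec xc by (simp add: m_assoc)
  also have "\<dots> = x \<otimes> actsum_eval G (l # w)" unfolding gx using gc Ec xc by (simp add: m_assoc)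
  finally show ?case .
qed

definition MM where "MM Q = (\<Prod>q\<in>Q. q ^ e q)"

lemma main_ind:
  assumes "finite Q" 
  shows "Q \<subseteq> P \<Longrightarrow> (\<forall>w. wq Q w \<longrightarrow> actsum_eval G w [^] MM Q = \<one> \<and>
           (\<forall>w'. wq Q w' \<longrightarrow> actsum_eval G w = actsum_eval G w' \<longrightarrow> actsum_rel G FF w w'))"
  using assms
proof (induction Q rule: finite_induct)
  case empty
  have e: "wq {} w \<Longrightarrow> w = []" for w unfolding wq_def by (cases w) auto
  show ?case
  proof (intro allI impI conjI)
    fix w assume "wq {} w" then show "actsum_eval G w [^] MM {} = \<one>" using e[of w] by (simp add: MM_def)
  next
    fix w w' assume "wq {} w" "wq {} w'"
    then show "actsum_rel G FF w w'" using e[of w] e[of w'] by (simp add: actsum_rel.refl)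
  qed
next
  case (insert p Q)
  have pP: "p \<in> P" and QP: "Q \<subseteq> P" using insert.prems by auto
  note IH = insert.IH[OF QP]
  have MMi: "MM (insert p Q) = p ^ e p * MM Q" unfolding MM_def using insert.hyps by simp
  have cop: "coprime (p ^ e p) (MM Q)" unfolding MM_def
  proof (rule prod_coprime_right)
    fix q assume q: "q \<in> Q"
    have "q \<in> P" using q QP by blast
    moreover have "p \<noteq> q" using q insert.hyps(2) by blast
    ultimately show "coprime (p ^ e p) (q ^ e q)" by (rule copr[OF pP])
  qed
  have FFp: "Fam p \<subseteq> FF" unfolding FF_def using pP by blast
  have famHp: "\<forall>F\<in>Fam p. F \<subseteq> Hp p" using famsub[OF pP] by blast
  have dec: "actsum_rel G FF w (filter (\<lambda>l. prm (fst l) = p) w @ filter (\<lambda>l. prm (fst l) \<noteq> p) w)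
      \<and> actsum_word (Fam p) (filter (\<lambda>l. prm (fst l) = p) w)
      \<and> (\<forall>l\<in>set (filter (\<lambda>l. prm (fst l) = p) w). fst l \<in> FF \<and> snd l \<in> fst l \<and> prm (fst l) = p)
      \<and> wq Q (filter (\<lambda>l. prm (fst l) \<noteq> p) w)
      \<and> actsum_eval G w = actsum_eval G (filter (\<lambda>l. prm (fst l) = p) w) \<otimes> actsum_eval G (filter (\<lambda>l. prm (fst l) \<noteq> p) w)"
    if w: "wq (insert p Q) w" for w
  proof -
    define a where "a = filter (\<lambda>l. prm (fst l) = p) w"
    define b where "b = filter (\<lambda>l. prm (fst l) \<noteq> p) w"
    have r: "actsum_rel G FF w (a @ b)" unfolding a_def b_def by (rule split[OF w])
    have aw: "\<forall>l\<in>set a. fst l \<in> FF \<and> snd l \<in> fst l \<and> prm (fst l) = p"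
      using w unfolding a_def wq_def by auto
    have aword: "actsum_word (Fam p) a" unfolding actsum_word_def
    proof (intro ballI, clarify)
      fix F g assume "(F, g) \<in> set a"
      then have "F \<in> FF" "g \<in> F" "prm F = p" using aw by auto
      then show "F \<in> Fam p \<and> g \<in> F" using prI by auto
    qed
    have bw: "wq Q b" using w unfolding b_def wq_def by auto
    have wc: "set (map snd w) \<subseteq> carrier G" by (rule wq_carrier[OF w])
    have ac: "set (map snd a) \<subseteq> carrier G" using wc unfolding a_def by auto
    have bc: "set (map snd b) \<subseteq> carrier G" using wc unfolding b_def by auto
    have "actsum_eval G w = actsum_eval G (a @ b)" using rel_sound[OF FF_carrier r] wc by blast
    also have "\<dots> = actsum_eval G a \<otimes> actsum_eval G b" by (rule eval_append[OF ac bc])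
    finally show ?thesis using r aword aw bw unfolding a_def b_def by blast
  qed
  show ?case
  proof (intro allI impI conjI)
    fix w assume w: "wq (insert p Q) w"
    define a where "a = filter (\<lambda>l. prm (fst l) = p) w"
    define b where "b = filter (\<lambda>l. prm (fst l) \<noteq> p) w"
    have d: "actsum_rel G FF w (a @ b)" "actsum_word (Fam p) a"
      "\<forall>l\<in>set a. fst l \<in> FF \<and> snd l \<in> fst l \<and> prm (fst l) = p" "wq Q b"
      "actsum_eval G w = actsum_eval G a \<otimes> actsum_eval G b"
      using dec[OF w] unfolding a_def b_def by blast+
    define A where "A = actsum_eval G a"
    define B where "B = actsum_eval G b"
    have AH: "A \<in> Hp p" unfolding A_def by (rule eval_Hp[OF pP d(3)])
    have Ac: "A \<in> carrier G" using AH sub[OF pP] subgroup.subset by blast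
    have Bc: "B \<in> carrier G" unfolding B_def by (rule eval_closed[OF wq_carrier[OF d(4)]])
    have BM: "B [^] MM Q = \<one>" using IH d(4) unfolding B_def by blast
    have AB: "B \<otimes> A = A \<otimes> B" unfolding B_def by (rule eval_comm[OF pP insert.hyps(2) AH d(4)])
    have Ap: "A [^] (p ^ e p) = \<one>" by (rule powe[OF pP AH])
    have "actsum_eval G w [^] MM (insert p Q) = (A \<otimes> B) [^] (p ^ e p * MM Q)"
      using d(5) MMi unfolding A_def B_def by simp
    also have "\<dots> = A [^] (p ^ e p * MM Q) \<otimes> B [^] (p ^ e p * MM Q)"
      by (rule pow_mult_distrib[OF AB[symmetric] Ac Bc])
    also have "A [^] (p ^ e p * MM Q) = \<one>" using Ac Ap by (simp add: nat_pow_pow[symmetric])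
    also have "B [^] (p ^ e p * MM Q) = \<one>" using Bc BM by (simp add: nat_pow_pow[symmetric] mult.commute)
    finally show "actsum_eval G w [^] MM (insert p Q) = \<one>" by simp
  next
    fix w w' assume w: "wq (insert p Q) w" and w': "wq (insert p Q) w'"
      and eq: "actsum_eval G w = actsum_eval G w'"
    define a where "a = filter (\<lambda>l. prm (fst l) = p) w"
    define b where "b = filter (\<lambda>l. prm (fst l) \<noteq> p) w"
    define a' where "a' = filter (\<lambda>l. prm (fst l) = p) w'"
    define b' where "b' = filter (\<lambda>l. prm (fst l) \<noteq> p) w'"
    have d: "actsum_rel G FF w (a @ b)" "actsum_word (Fam p) a"
      "\<forall>l\<in>set a. fst l \<in> FF \<and> snd l \<in> fst l \<and> prm (fst l) = p" "wq Q b"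
      "actsum_eval G w = actsum_eval G a \<otimes> actsum_eval G b"
      using dec[OF w] unfolding a_def b_def by blast+
    have d': "actsum_rel G FF w' (a' @ b')" "actsum_word (Fam p) a'"
      "\<forall>l\<in>set a'. fst l \<in> FF \<and> snd l \<in> fst l \<and> prm (fst l) = p" "wq Q b'"
      "actsum_eval G w' = actsum_eval G a' \<otimes> actsum_eval G b'"
      using dec[OF w'] unfolding a'_def b'_def by blast+
    define A where "A = actsum_eval G a"
    define B where "B = actsum_eval G b"
    define A' where "A' = actsum_eval G a'"
    define B' where "B' = actsum_eval G b'"
    have AH: "A \<in> Hp p" unfolding A_def by (rule eval_Hp[OF pP d(3)])
    have AH': "A' \<in> Hp p" unfolding A'_def by (rule eval_Hp[OF pP d'(3)])
    have Ac: "A \<in> carrier G" using AH sub[OF pP] subgroup.subset by blast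
    have Ac': "A' \<in> carrier G" using AH' sub[OF pP] subgroup.subset by blast
    have Bc: "B \<in> carrier G" unfolding B_def by (rule eval_closed[OF wq_carrier[OF d(4)]])
    have Bc': "B' \<in> carrier G" unfolding B'_def by (rule eval_closed[OF wq_carrier[OF d'(4)]])
    have BM: "B [^] MM Q = \<one>" using IH d(4) unfolding B_def by blast
    have BM': "B' [^] MM Q = \<one>" using IH d'(4) unfolding B'_def by blast
    have ABeq: "A \<otimes> B = A' \<otimes> B'" using eq d(5) d'(5) unfolding A_def B_def A'_def B'_def by simp
    define z where "z = inv A' \<otimes> A"
    have zH: "z \<in> Hp p" unfolding z_def using AH AH' sub[OF pP] by (blast intro: subgroup.m_closed subgroup.m_inv_closed)
    have zc: "z \<in> carrier G" unfolding z_def using Ac Ac' by simp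
    have zB: "z \<otimes> B = B'"
    proof -
      have "z \<otimes> B = inv A' \<otimes> (A \<otimes> B)" unfolding z_def using Ac Ac' Bc by (simp add: m_assoc)
      also have "\<dots> = B'" unfolding ABeq using Ac' Bc' by simp
      finally show ?thesis .
    qed
    have Bz: "B \<otimes> z = z \<otimes> B" unfolding B_def by (rule eval_comm[OF pP insert.hyps(2) zH d(4)])
    have "\<one> = (z \<otimes> B) [^] MM Q" using BM' zB by simp
    also have "\<dots> = z [^] MM Q \<otimes> B [^] MM Q" by (rule pow_mult_distrib[OF Bz[symmetric] zc Bc])
    also have "\<dots> = z [^] MM Q" using BM zc by simp
    finally have zM: "z [^] MM Q \<in> {\<one>}" by simp
    have zp: "z [^] (p ^ e p) \<in> {\<one>}" using powe[OF pP zH] by simp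
    have "z \<in> {\<one>}" by (rule coprime_mem[OF triv_subgroup zc zp zM cop])
    then have z1: "z = \<one>" by simp
    have AA: "A = A'"
    proof -
      have "A = A' \<otimes> z" unfolding z_def using Ac Ac' by (simp add: m_assoc[symmetric])
      then show ?thesis using z1 Ac' by simp
    qed
    have BB: "B = B'" using zB z1 Bc by simp
    have ra: "actsum_rel G FF a a'"
      by (rule rel_lift[OF sub[OF pP] famHp FFp actp[OF pP d(2) d'(2)]]) (use AA in \<open>simp add: A_def A'_def\<close>)
    have rb: "actsum_rel G FF b b'" using IH d(4) d'(4) BB unfolding B_def B'_def by blast
    have "actsum_rel G FF (a @ b) (a' @ b')" by (rule rel_app[OF ra rb])
    then show "actsum_rel G FF w w'"
      by (rule actsum_rel.trans[OF actsum_rel.trans[OF d(1)] actsum_rel.sym[OF d'(1)]])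
  qed
qed

lemma conj_mult:
  assumes "h1 \<in> carrier G" "h2 \<in> carrier G" "F \<subseteq> carrier G"
  shows "conj_set G (h1 \<otimes> h2) F = conj_set G h2 (conj_set G h1 F)"
proof -
  have "inv (h1 \<otimes> h2) \<otimes> x \<otimes> (h1 \<otimes> h2) = inv h2 \<otimes> (inv h1 \<otimes> x \<otimes> h1) \<otimes> h2" if "x \<in> F" for x
    using assms that by (auto simp: inv_mult_group m_assoc)
  then show ?thesis unfolding conj_set_def image_image by (rule image_cong[OF HOL.refl])
qed

definition TT where "TT = {h \<in> carrier G. \<forall>p\<in>P. \<forall>F\<in>Fam p. conj_set G h F \<in> Fam p}"

lemma Hp_TT: assumes q: "q \<in> P" and h: "h \<in> Hp q" shows "h \<in> TT"
proof -
  have hc: "h \<in> carrier G" using h sub[OF q] subgroup.subset by blast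
  have "conj_set G h F \<in> Fam p" if p: "p \<in> P" and F: "F \<in> Fam p" for p F
  proof (cases "p = q")
    case True then show ?thesis using conjc[OF p F] h by simp
  next
    case False
    have FH: "F \<subseteq> Hp p" using famsub[OF p F] by blast
    have Fc: "F \<subseteq> carrier G" using FH sub[OF p] subgroup.subset by blast
    have "conj_set G h F = F"
    proof (rule conj_id[OF hc Fc])
      fix x assume "x \<in> F"
      then have "x \<in> Hp p" using FH by blast
      then show "x \<otimes> h = h \<otimes> x" by (rule comm[OF p q False _ h])
    qed
    then show ?thesis using F by simp
  qed
  then show ?thesis unfolding TT_def using hc by blast
qed

lemma gen_TT: "generate G (\<Union>p\<in>P. Hp p) \<subseteq> TT"
proof
  fix h assume "h \<in> generate G (\<Union>p\<in>P. Hp p)"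
  then show "h \<in> TT"
  proof (induction rule: generate.induct)
    case one
    have "conj_set G \<one> F = F" if p: "p \<in> P" and F: "F \<in> Fam p" for p F
    proof -
      have Fc: "F \<subseteq> carrier G" using famsub[OF p F] sub[OF p] subgroup.subset by blast
      show ?thesis by (rule conj_id[OF one_closed Fc]) (use Fc in auto)
    qed
    then show ?case unfolding TT_def by simp
  next
    case (incl h)
    then obtain q where "q \<in> P" "h \<in> Hp q" by blast
    then show ?case by (rule Hp_TT)
  next
    case (inv h)
    then obtain q where q: "q \<in> P" and h: "h \<in> Hp q" by blast
    have "inv h \<in> Hp q" using subgroup.m_inv_closed[OF sub[OF q] h] .
    then show ?case by (rule Hp_TT[OF q])
  next
    case (eng h1 h2)
    have c: "h1 \<in> carrier G" "h2 \<in> carrier G" using eng.IH unfolding TT_def by auto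
    have "conj_set G (h1 \<otimes> h2) F \<in> Fam p" if p: "p \<in> P" and F: "F \<in> Fam p" for p F
    proof -
      have Fc: "F \<subseteq> carrier G" using famsub[OF p F] sub[OF p] subgroup.subset by blast
      have "conj_set G h1 F \<in> Fam p" using eng.IH(1) p F unfolding TT_def by blast
      then have "conj_set G h2 (conj_set G h1 F) \<in> Fam p" using eng.IH(2) p unfolding TT_def by blast
      then show ?thesis using conj_mult[OF c Fc] by simp
    qed
    then show ?case unfolding TT_def using c by simp
  qed
qed

theorem LS_active: "is_active_sum G FF"
proof -
  have subs: "\<forall>F\<in>FF. subgroup F G" using prI famsub by blast
  have cc: "\<forall>F\<in>FF. \<forall>h\<in>carrier G. conj_set G h F \<in> FF"
  proof (intro ballI)
    fix F h assume F: "F \<in> FF" and h: "h \<in> carrier G"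
    have "h \<in> TT" using gen_TT genall h by blast
    then have "conj_set G h F \<in> Fam (prm F)" using prI[OF F] unfolding TT_def by blast
    then show "conj_set G h F \<in> FF" unfolding FF_def using prI[OF F] by blast
  qed
  have UFc: "\<Union>FF \<subseteq> carrier G" using FF_carrier by blast
  have gen: "generate G (\<Union>FF) = carrier G"
  proof
    show "generate G (\<Union>FF) \<subseteq> carrier G" by (rule generate_incl[OF UFc])
  next
    have "(\<Union>p\<in>P. Hp p) \<subseteq> generate G (\<Union>FF)"
    proof clarify
      fix p x assume p: "p \<in> P" and x: "x \<in> Hp p"
      have "\<Union>(Fam p) \<subseteq> \<Union>FF" unfolding FF_def using p by blast
      then have "generate G (\<Union>(Fam p)) \<subseteq> generate G (\<Union>FF)" by (rule mono_generate)
      then show "x \<in> generate G (\<Union>FF)" using genp[OF p] x by blast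
    qed
    then have "generate G (\<Union>p\<in>P. Hp p) \<subseteq> generate G (\<Union>FF)"
      by (rule generate_subgroup_incl[OF _ generate_is_subgroup[OF UFc]])
    then show "carrier G \<subseteq> generate G (\<Union>FF)" using genall by simp
  qed
  have inj: "actsum_rel G FF w w'" if w: "actsum_word FF w" and w': "actsum_word FF w'"
    and eq: "actsum_eval G w = actsum_eval G w'" for w w'
  proof -
    have "wq P w" using w prI unfolding actsum_word_def wq_def by auto
    moreover have "wq P w'" using w' prI unfolding actsum_word_def wq_def by auto
    ultimately show ?thesis using main_ind[OF finP subset_refl] eq by blast
  qed
  show ?thesis unfolding is_active_sum_def conj_closed_gen_family_def using subs cc gen inj by blast
qed

end

lemma sub_of_sub:
  fixes G (structure)
  assumes G: "group G" and S: "subgroup S G" and F: "subgroup F (G\<lparr>carrier := S\<rparr>)"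
  shows "subgroup F G"
proof -
  interpret group G by (rule G)
  have FS: "F \<subseteq> S" using subgroup.subset[OF F] by simp
  show ?thesis
  proof (rule subgroupI)
    show "F \<subseteq> carrier G" using FS subgroup.subset[OF S] by blast
    show "F \<noteq> {}" using subgroup.one_closed[OF F] by auto
  next
    fix a assume a: "a \<in> F"
    have "inv\<^bsub>G\<lparr>carrier := S\<rparr>\<^esub> a \<in> F" by (rule subgroup.m_inv_closed[OF F a])
    then show "inv a \<in> F" using m_inv_consistent[OF S] a FS by auto
  next
    fix a b assume "a \<in> F" "b \<in> F"
    then show "a \<otimes> b \<in> F" using subgroup.m_closed[OF F] by simp
  qed
qed

theorem lemma4p3:
  fixes H :: "('a, 'b) monoid_scheme"
    and Hp :: "nat \<Rightarrow> 'a set" and A B :: "nat \<Rightarrow> 'a set" and Fam :: "nat \<Rightarrow> 'a set set"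
  assumes "group H" and "finite (carrier H)" and "nilpotent_group H"
    and sylow: "\<And>p. Factorial_Ring.prime p \<Longrightarrow> p dvd order H \<Longrightarrow>
                  subgroup (Hp p) H \<and> card (Hp p) = p ^ multiplicity p (order H)"
    and metacyclic: "\<And>p. Factorial_Ring.prime p \<Longrightarrow> p dvd order H \<Longrightarrow>
          subgroup (A p) H \<and> subgroup (B p) H \<and>
          cyclic_group (subgroup_generated H (A p)) \<and> cyclic_group (subgroup_generated H (B p)) \<and>
          A p \<lhd> H\<lparr>carrier := Hp p\<rparr> \<and> Hp p = B p <#>\<^bsub>H\<^esub> A p"
    and fam: "\<And>p. Factorial_Ring.prime p \<Longrightarrow> p dvd order H \<Longrightarrow>
          Fam p = insert (A p) ((\<lambda>x. conj_set H x (B p)) ` Hp p)"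
    and props: "\<And>p. Factorial_Ring.prime p \<Longrightarrow> p dvd order H \<Longrightarrow>
          regular_family (H\<lparr>carrier := Hp p\<rparr>) (Fam p) \<and>
          independent_family (H\<lparr>carrier := Hp p\<rparr>) (Fam p) \<and>
          is_active_sum (H\<lparr>carrier := Hp p\<rparr>) (Fam p)"
  shows "is_active_sum H (\<Union>p \<in> {p. Factorial_Ring.prime p \<and> p dvd order H}. Fam p)"
proof -
  interpret group H by fact
  define P where "P = {p. Factorial_Ring.prime p \<and> p dvd order H}"
  define e where "e p = multiplicity p (order H)" for p
  have ordpos: "order H > 0" using assms(2) order_gt_0_iff_finite by blast
  have finP: "finite P"
  proof (rule finite_subset)
    show "P \<subseteq> {..order H}" unfolding P_def using ordpos by (auto intro: dvd_imp_le)
  qed simp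
  have Pprime: "p \<in> P \<Longrightarrow> Factorial_Ring.prime p \<and> p dvd order H" for p unfolding P_def by simp
  have sub: "p \<in> P \<Longrightarrow> subgroup (Hp p) H" for p using sylow Pprime by blast
  have cardHp: "p \<in> P \<Longrightarrow> card (Hp p) = p ^ e p" for p using sylow Pprime unfolding e_def by blast
  have act: "p \<in> P \<Longrightarrow> is_active_sum (H\<lparr>carrier := Hp p\<rparr>) (Fam p)" for p using props Pprime by blast
  have powe: "x [^]\<^bsub>H\<^esub> (p ^ e p) = \<one>\<^bsub>H\<^esub>" if p: "p \<in> P" and x: "x \<in> Hp p" for p x
  proof -
    interpret S: group "H\<lparr>carrier := Hp p\<rparr>" by (rule subgroup.subgroup_is_group[OF sub[OF p] is_group])
    have "x [^]\<^bsub>H\<lparr>carrier := Hp p\<rparr>\<^esub> order (H\<lparr>carrier := Hp p\<rparr>) = \<one>\<^bsub>H\<lparr>carrier := Hp p\<rparr>\<^esub>"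
      by (rule S.pow_order_eq_1) (use x in simp)
    moreover have "order (H\<lparr>carrier := Hp p\<rparr>) = p ^ e p" using cardHp[OF p] by (simp add: order_def)
    ultimately show ?thesis using nat_pow_consistent[of x "p ^ e p" "Hp p"] by simp
  qed
  have copr: "coprime (p ^ e p) (q ^ e q)" if "p \<in> P" "q \<in> P" "p \<noteq> q" for p q
  proof -
    have "coprime p q" using primes_coprime Pprime that by blast
    then show ?thesis by simp
  qed
  obtain n0 where n0: "lower_central H n0 = {\<one>\<^bsub>H\<^esub>}" using assms(3) unfolding nilpotent_group_def by blast
  have comm: "x \<otimes>\<^bsub>H\<^esub> y = y \<otimes>\<^bsub>H\<^esub> x" if p: "p \<in> P" and q: "q \<in> P" and pq: "p \<noteq> q" and x: "x \<in> Hp p" and y: "y \<in> Hp q" for p q x y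
  proof (rule nilp_commute[OF n0])
    show "x \<in> carrier H" using x sub[OF p] subgroup.subset by blast
    show "y \<in> carrier H" using y sub[OF q] subgroup.subset by blast
    show "x [^]\<^bsub>H\<^esub> (p ^ e p) = \<one>\<^bsub>H\<^esub>" by (rule powe[OF p x])
    show "y [^]\<^bsub>H\<^esub> (q ^ e q) = \<one>\<^bsub>H\<^esub>" by (rule powe[OF q y])
    show "coprime (p ^ e p) (q ^ e q)" by (rule copr[OF p q pq])
  qed
  have ccg: "p \<in> P \<Longrightarrow> conj_closed_gen_family (H\<lparr>carrier := Hp p\<rparr>) (Fam p)" for p
    using act unfolding is_active_sum_def by blast
  have famsub: "subgroup F H \<and> F \<subseteq> Hp p" if p: "p \<in> P" and F: "F \<in> Fam p" for p F
  proof -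
    have sF: "subgroup F (H\<lparr>carrier := Hp p\<rparr>)" using ccg[OF p] F unfolding conj_closed_gen_family_def by blast
    have "F \<subseteq> Hp p" using subgroup.subset[OF sF] by simp
    then show ?thesis using sub_of_sub[OF is_group sub[OF p] sF] by blast
  qed
  have conjc: "conj_set H h F \<in> Fam p" if p: "p \<in> P" and F: "F \<in> Fam p" and h: "h \<in> Hp p" for p F h
  proof -
    have "conj_set (H\<lparr>carrier := Hp p\<rparr>) h F \<in> Fam p" using ccg[OF p] F h unfolding conj_closed_gen_family_def by simp
    moreover have "conj_set (H\<lparr>carrier := Hp p\<rparr>) h F = conj_set H h F"
      unfolding conj_set_def using m_inv_consistent[OF sub[OF p] h] by simp
    ultimately show ?thesis by simp
  qed
  have genp: "Hp p \<subseteq> generate H (\<Union>(Fam p))" if p: "p \<in> P" for p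
  proof -
    have g: "generate (H\<lparr>carrier := Hp p\<rparr>) (\<Union>(Fam p)) = Hp p" using ccg[OF p] unfolding conj_closed_gen_family_def by simp
    have "\<Union>(Fam p) \<subseteq> Hp p" using famsub[OF p] by blast
    then have "generate (H\<lparr>carrier := Hp p\<rparr>) (\<Union>(Fam p)) = generate H (\<Union>(Fam p))"
      by (rule generate_consistent[OF _ sub[OF p]])
    then show ?thesis using g by simp
  qed
  have actp: "actsum_rel (H\<lparr>carrier := Hp p\<rparr>) (Fam p) w w'"
    if p: "p \<in> P" and w: "actsum_word (Fam p) w" and w': "actsum_word (Fam p) w'"
      and eq: "actsum_eval H w = actsum_eval H w'" for p w w'
  proof -
    have "actsum_eval (H\<lparr>carrier := Hp p\<rparr>) w = actsum_eval (H\<lparr>carrier := Hp p\<rparr>) w'"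
      using eq unfolding actsum_eval_def by simp
    then show ?thesis using act[OF p] w w' unfolding is_active_sum_def by blast
  qed
  have genall: "generate H (\<Union>p\<in>P. Hp p) = carrier H"
  proof -
    define K where "K = generate H (\<Union>p\<in>P. Hp p)"
    have Uc: "(\<Union>p\<in>P. Hp p) \<subseteq> carrier H" using sub subgroup.subset by blast
    have Ks: "subgroup K H" unfolding K_def by (rule generate_is_subgroup[OF Uc])
    have Kc: "K \<subseteq> carrier H" using subgroup.subset[OF Ks] .
    have finK: "finite K" using finite_subset[OF Kc assms(2)] .
    have K0: "card K \<noteq> 0" using finK subgroup.one_closed[OF Ks] by (auto simp: card_eq_0_iff)
    have dv: "card (Hp p) dvd card K" if p: "p \<in> P" for p
    proof -
      have HK: "Hp p \<subseteq> K" unfolding K_def using p by (auto intro: generate.incl)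
      interpret KG: group "H\<lparr>carrier := K\<rparr>" by (rule subgroup.subgroup_is_group[OF Ks is_group])
      have "subgroup (Hp p) (H\<lparr>carrier := K\<rparr>)" by (rule subgroup_incl[OF sub[OF p] Ks HK])
      from KG.lagrange[OF this] have "card (rcosets\<^bsub>H\<lparr>carrier := K\<rparr>\<^esub> Hp p) * card (Hp p) = card K"
        by (simp add: order_def)
      then show ?thesis by (metis dvd_triv_right)
    qed
    have "order H dvd card K"
    proof (rule multiplicity_le_imp_dvd)
      show "order H \<noteq> 0" using ordpos by simp
    next
      fix p :: nat assume pr: "Factorial_Ring.prime p"
      show "multiplicity p (order H) \<le> multiplicity p (card K)"
      proof (cases "p dvd order H")
        case True
        then have p: "p \<in> P" unfolding P_def using pr by simp
        have dvK: "p ^ e p dvd card K" using dv[OF p] cardHp[OF p] by simp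
        have nu: "\<not> is_unit p" using pr not_prime_unit by blast
        have "e p \<le> multiplicity p (card K)" by (rule multiplicity_geI[OF K0 nu dvK])
        then show ?thesis unfolding e_def .
      next
        case False
        then show ?thesis by (simp add: not_dvd_imp_multiplicity_0)
      qed
    qed
    then have "order H \<le> card K" using K0 by (simp add: dvd_imp_le)
    moreover have "card K \<le> order H" unfolding order_def using card_mono[OF assms(2) Kc] .
    ultimately have "card K = card (carrier H)" unfolding order_def by simp
    then have "K = carrier H" using card_subset_eq[OF assms(2) Kc] by simp
    then show ?thesis unfolding K_def .
  qed
  interpret L: LS H P Hp Fam e
    by (rule LS.intro[OF is_group LS_axioms.intro[OF finP sub powe copr comm famsub conjc genp genall actp]])
  have "is_active_sum H L.FF" by (rule L.LS_active)
  moreover have "L.FF = (\<Union>p \<in> P. Fam p)" by (rule L.FF_def)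
  ultimately show ?thesis unfolding P_def by simp
qed

end
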